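(* Let $a_\beta$ denote the unique maximizer of $T_0$ on $(0,\infty)$ (for $\beta>\beta_c$) and $q_\beta=a_\beta^{-2}$. Then $q_\beta=1+O(\beta^{-2})$ as $\beta\to\infty$.
   Context: $\Gamma_\beta=\frac{e^{-\beta}+e^{-3\beta/2}}{1-e^{-\beta/2}}$, $\beta_c$ the unique positive solution of $\Gamma_\beta=1$. $c_\beta=\frac{1+e^{-\beta/2}}{1-e^{-\beta/2}}$, $\mathcal L(h)=\log\sum_{k\in\mathbb Z}e^{hk}e^{-\beta|k|/2}/c_\beta$ for $|h|<\beta/2$. $\mathcal G(h)=\int_0^1\mathcal L(h(x-\frac12))dx$ for $h\in(-\beta,\beta)$, $\tilde h(q)$ the unique $h\in[0,\beta)$ with $\mathcal G'(h)=q$. $T_0(a)=a\log\Gamma_\beta+a\big(\mathcal G(\tilde h(a^{-2}))-a^{-2}\tilde h(a^{-2})\big)$ for $a>0$. *)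

theory Defs
  imports "HOL-Analysis.Analysis" "HOL-Library.Landau_Symbols"
begin

definition Gamma_beta :: "real \<Rightarrow> real" where
  "Gamma_beta \<beta> = (exp (-\<beta>) + exp (-3*\<beta>/2)) / (1 - exp (-\<beta>/2))"

definition beta_c :: real where
  "beta_c = (THE \<beta>. \<beta> > 0 \<and> Gamma_beta \<beta> = 1)"

definition c_beta :: "real \<Rightarrow> real" where
  "c_beta \<beta> = (1 + exp (-\<beta>/2)) / (1 - exp (-\<beta>/2))"

text \<open>L(h) = log (sum over k in Z of e^(hk) e^(-beta|k|/2) / c_beta), meaningful for |h| < beta/2.\<close>
definition LL :: "real \<Rightarrow> real \<Rightarrow> real" where
  "LL \<beta> h = ln ((\<Sum>\<^sub>\<infinity>k::int. exp (h * of_int k) * exp (-\<beta> * \<bar>of_int k\<bar> / 2)) / c_beta \<beta>)"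

definition GG :: "real \<Rightarrow> real \<Rightarrow> real" where
  "GG \<beta> h = integral {0..1} (\<lambda>x. LL \<beta> (h * (x - 1/2)))"

definition htilde :: "real \<Rightarrow> real \<Rightarrow> real" where
  "htilde \<beta> q = (THE h. 0 \<le> h \<and> h < \<beta> \<and> deriv (GG \<beta>) h = q)"

definition T0 :: "real \<Rightarrow> real \<Rightarrow> real" where
  "T0 \<beta> a = a * ln (Gamma_beta \<beta>)
     + a * (GG \<beta> (htilde \<beta> (a powr -2)) - a powr -2 * htilde \<beta> (a powr -2))"

definition a_beta :: "real \<Rightarrow> real" where
  "a_beta \<beta> = (THE a. a > 0 \<and> (\<forall>b>0. T0 \<beta> b \<le> T0 \<beta> a))"

definition q_beta :: "real \<Rightarrow> real" where
  "q_beta \<beta> = (a_beta \<beta>) powr -2"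

end

theory Submission
  imports Defs
begin

definition tt :: "real \<Rightarrow> real" where "tt \<beta> = exp (-\<beta>/2)"
definition ell :: "real \<Rightarrow> real \<Rightarrow> real" where
  "ell \<beta> u = ln (1 - tt \<beta>) - ln (1 - tt \<beta> * exp u)"
definition Lc :: "real \<Rightarrow> real \<Rightarrow> real" where "Lc \<beta> u = ell \<beta> u + ell \<beta> (-u)"

lemma LL_closed:
  assumes b: "\<beta> > 0" and u: "\<bar>u\<bar> < \<beta>/2"
  shows "LL \<beta> u = Lc \<beta> u"
proof -
  define t where "t = tt \<beta>"
  define a where "a = t * exp u"
  define b where "b = t * exp (-u)"
  have a_eq: "a = exp (u - \<beta>/2)" unfolding a_def t_def tt_def by (simp add: exp_add[symmetric])
  have b_eq: "b = exp (-u - \<beta>/2)" unfolding b_def t_def tt_def by (simp add: exp_add[symmetric])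
  have a0: "0 < a" "a < 1" using u by (auto simp: a_eq)
  have b0: "0 < b" "b < 1" using u by (auto simp: b_eq)
  have t0: "0 < t" "t < 1" using b by (auto simp: t_def tt_def)
  define f where "f = (\<lambda>k::int. exp (u * of_int k) * exp (-\<beta> * \<bar>of_int k\<bar> / 2))"
  have fpos: "f (int n) = a ^ n" for n
  proof -
    have "f (int n) = exp (real n * (u - \<beta>/2))"
      unfolding f_def by (simp add: exp_add[symmetric] algebra_simps)
    also have "\<dots> = a ^ n" by (simp add: a_eq exp_of_nat_mult)
    finally show ?thesis .
  qed
  have fneg: "f (- int n - 1) = b * b ^ n" for n
  proof -
    have "f (- int n - 1) = exp (real (Suc n) * (-u - \<beta>/2))"
      unfolding f_def by (simp add: exp_add[symmetric] field_simps)
    also have "\<dots> = exp (-u - \<beta>/2) ^ Suc n" by (rule exp_of_nat_mult)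
    also have "\<dots> = b * b ^ n" by (simp add: b_eq)
    finally show ?thesis .
  qed
  have fpos': "f k = a ^ nat k" if "0 \<le> k" for k using fpos[of "nat k"] that by simp
  have fneg': "f k = b * b ^ nat (- k - 1)" if "k < 0" for k using fneg[of "nat (- k - 1)"] that by simp
  have s1: "((\<lambda>n. a ^ n) has_sum (1 / (1 - a))) (UNIV::nat set)"
    by (rule sums_nonneg_imp_has_sum) (use a0 geometric_sums[of a] in auto)
  have s2: "((\<lambda>n. b * b ^ n) has_sum (b * (1 / (1 - b)))) (UNIV::nat set)"
    by (rule sums_nonneg_imp_has_sum) (use b0 sums_mult[OF geometric_sums[of b], of b] in auto)
  have h1: "(f has_sum (1 / (1 - a))) {k. 0 \<le> k}"
    using s1
    by (subst has_sum_reindex_bij_witness[where j="\<lambda>k. nat k" and i="\<lambda>n. int n" and T="UNIV::nat set"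
          and h="\<lambda>n. a ^ n" and s'="1/(1-a)"]) (auto simp: fpos')
  have h2: "(f has_sum (b * (1 / (1 - b)))) {k. k < 0}"
    using s2
    by (subst has_sum_reindex_bij_witness[where j="\<lambda>k. nat (- k - 1)" and i="\<lambda>n. - int n - 1" and T="UNIV::nat set"
          and h="\<lambda>n. b * b ^ n" and s'="b * (1/(1-b))"]) (auto simp: fneg')
  have "(f has_sum (1 / (1 - a) + b * (1 / (1 - b)))) ({k. 0 \<le> k} \<union> {k. k < 0})"
    by (rule has_sum_Un_disjoint[OF h1 h2]) auto
  moreover have "{k::int. 0 \<le> k} \<union> {k. k < 0} = UNIV" by auto
  ultimately have "(f has_sum (1 / (1 - a) + b * (1 / (1 - b)))) UNIV" by simp
  hence inf: "infsum f UNIV = 1 / (1 - a) + b * (1 / (1 - b))" by (rule infsumI)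
  have ab: "a * b = t^2" unfolding a_def b_def by (simp add: exp_minus power2_eq_square field_simps)
  have Zeq: "(1 / (1 - a) + b * (1 / (1 - b))) / c_beta \<beta> = (1 - t)^2 / ((1 - a) * (1 - b))"
  proof -
    have c: "c_beta \<beta> = (1 + t) / (1 - t)" unfolding c_beta_def t_def tt_def by simp
    have m: "1 - a*b = (1 - t) * (1 + t)" using ab by (simp add: power2_eq_square algebra_simps)
    have num: "1 / (1 - a) + b * (1 / (1 - b)) = ((1 - t) * (1 + t)) / ((1-a)*(1-b))"
      unfolding m[symmetric] using a0 b0 by (simp add: field_simps)
    show ?thesis unfolding c num using t0 a0 b0 by (simp add: power2_eq_square divide_simps)
  qed
  have "LL \<beta> u = ln ((1 - t)^2 / ((1 - a) * (1 - b)))"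
    unfolding LL_def using inf Zeq f_def by simp
  also have "\<dots> = 2 * ln (1 - t) - ln (1 - a) - ln (1 - b)"
    using a0 b0 t0 by (simp add: ln_div ln_mult ln_realpow)
  also have "\<dots> = Lc \<beta> u" unfolding Lc_def ell_def a_def b_def t_def by simp
  finally show ?thesis .
qed

definition dell :: "real \<Rightarrow> real \<Rightarrow> real" where
  "dell \<beta> u = tt \<beta> * exp u / (1 - tt \<beta> * exp u)"
definition dL :: "real \<Rightarrow> real \<Rightarrow> real" where "dL \<beta> u = dell \<beta> u - dell \<beta> (-u)"
definition Gc :: "real \<Rightarrow> real \<Rightarrow> real" where
  "Gc \<beta> h = integral {0..1} (\<lambda>x. Lc \<beta> (h * (x - 1/2)))"
definition dG :: "real \<Rightarrow> real \<Rightarrow> real" where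
  "dG \<beta> h = integral {0..1} (\<lambda>x. (x - 1/2) * dL \<beta> (h * (x - 1/2)))"

lemma tt_pos: "tt \<beta> > 0" by (simp add: tt_def)
lemma tt_lt1: "\<beta> > 0 \<Longrightarrow> tt \<beta> < 1" by (simp add: tt_def)
lemma tt_exp: "tt \<beta> * exp u = exp (u - \<beta>/2)" by (simp add: tt_def exp_add[symmetric])
lemma tt_exp_lt1: "u < \<beta>/2 \<Longrightarrow> tt \<beta> * exp u < 1" by (simp add: tt_exp)

lemma ell_deriv: assumes "u < \<beta>/2" shows "(ell \<beta> has_real_derivative dell \<beta> u) (at u)"
proof -
  have "tt \<beta> * exp u < 1" using tt_exp_lt1[OF assms] .
  then show ?thesis unfolding ell_def dell_def
    by (auto intro!: derivative_eq_intros simp: field_simps)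
qed

lemma Lc_deriv: assumes "\<bar>u\<bar> < \<beta>/2" shows "(Lc \<beta> has_real_derivative dL \<beta> u) (at u)"
proof -
  have d1: "(ell \<beta> has_real_derivative dell \<beta> u) (at u)" using ell_deriv assms by auto
  have d2: "((\<lambda>u. ell \<beta> (-u)) has_real_derivative dell \<beta> (-u) * (-1)) (at u)"
    using DERIV_chain2[OF ell_deriv[of "-u" \<beta>] DERIV_minus[OF DERIV_ident]] assms by auto
  have "((\<lambda>u. ell \<beta> u + ell \<beta> (-u)) has_real_derivative dell \<beta> u + dell \<beta> (-u) * (-1)) (at u)"
    by (rule DERIV_add[OF d1 d2])
  then show ?thesis unfolding Lc_def[abs_def] dL_def by simp
qed

lemma Lc_even: "Lc \<beta> (-u) = Lc \<beta> u" by (simp add: Lc_def)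
lemma Lc_0: "Lc \<beta> 0 = 0" by (simp add: Lc_def ell_def)
lemma dL_0: "dL \<beta> 0 = 0" by (simp add: dL_def)

lemma dell_cont: "continuous_on {..<\<beta>/2} (dell \<beta>)"
  unfolding dell_def using tt_exp_lt1
  by (auto intro!: continuous_intros simp: less_imp_neq)

lemma dL_cont: "continuous_on {-\<beta>/2<..<\<beta>/2} (dL \<beta>)"
proof -
  have "continuous_on {-\<beta>/2<..<\<beta>/2} (\<lambda>u. dell \<beta> u - dell \<beta> (-u))"
    by (intro continuous_intros continuous_on_compose2[OF dell_cont] continuous_on_subset[OF dell_cont])
       auto
  then show ?thesis unfolding dL_def[abs_def] .
qed

lemma Lc_cont: "continuous_on {-\<beta>/2<..<\<beta>/2} (Lc \<beta>)"
proof (rule continuous_at_imp_continuous_on, safe)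
  fix x assume "x \<in> {-\<beta>/2<..<\<beta>/2}"
  then show "isCont (Lc \<beta>) x" by (intro DERIV_isCont[OF Lc_deriv]) auto
qed

lemma arg_bound: assumes "\<bar>h\<bar> < \<beta>" "x \<in> {0..1::real}" shows "\<bar>h * (x - 1/2)\<bar> < \<beta>/2"
proof -
  have "\<bar>x - 1/2\<bar> \<le> 1/2" unfolding abs_le_iff using assms(2) by auto
  hence "\<bar>h * (x - 1/2)\<bar> \<le> \<bar>h\<bar> * (1/2)" unfolding abs_mult by (intro mult_left_mono) auto
  also have "\<dots> < \<beta>/2" using assms(1) by simp
  finally show ?thesis .
qed

lemma GG_eq: assumes "\<beta> > 0" "\<bar>h\<bar> < \<beta>" shows "GG \<beta> h = Gc \<beta> h"
  unfolding GG_def Gc_def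
  by (rule integral_cong) (use LL_closed arg_bound assms in auto)

lemma prod_cont: "continuous_on ({-\<beta><..<\<beta>} \<times> cbox 0 1) (\<lambda>(h, x::real). (x - 1/2) * dL \<beta> (h * (x - 1/2)))"
proof -
  have "continuous_on ({-\<beta><..<\<beta>} \<times> cbox 0 1) (\<lambda>p. (snd p - 1/2) * dL \<beta> (fst p * (snd p - 1/2)))"
  proof (intro continuous_intros continuous_on_compose2[OF dL_cont])
    show "(\<lambda>p. fst p * (snd p - 1/2)) ` ({-\<beta><..<\<beta>} \<times> cbox 0 1) \<subseteq> {-\<beta>/2<..<\<beta>/2}"
      using arg_bound by (force simp: abs_less_iff)
  qed
  then show ?thesis by (simp add: case_prod_beta')
qed

lemma Gc_deriv: assumes "\<bar>h\<bar> < \<beta>" shows "(Gc \<beta> has_real_derivative dG \<beta> h) (at h)"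
proof -
  have "((\<lambda>h. integral (cbox 0 1) (\<lambda>x. Lc \<beta> (h * (x - 1/2)))) has_field_derivative
        integral (cbox 0 1) (\<lambda>x. (x - 1/2) * dL \<beta> (h * (x - 1/2)))) (at h within {-\<beta><..<\<beta>})"
  proof (rule leibniz_rule_field_derivative[where fx="\<lambda>h x. (x - 1/2) * dL \<beta> (h * (x - 1/2))"])
    fix h x :: real assume h: "h \<in> {-\<beta><..<\<beta>}" and x: "x \<in> cbox 0 1"
    have "\<bar>h * (x - 1/2)\<bar> < \<beta>/2" using arg_bound[of h \<beta> x] h x by auto
    then have "((\<lambda>h. Lc \<beta> (h * (x - 1/2))) has_field_derivative dL \<beta> (h * (x - 1/2)) * (x - 1/2)) (at h)"
      by (intro DERIV_chain2[OF Lc_deriv]) (auto intro!: derivative_eq_intros)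
    then show "((\<lambda>h. Lc \<beta> (h * (x - 1/2))) has_field_derivative (x - 1/2) * dL \<beta> (h * (x - 1/2))) (at h within {-\<beta><..<\<beta>})"
      by (simp add: mult.commute has_field_derivative_at_within)
  next
    fix h :: real assume h: "h \<in> {-\<beta><..<\<beta>}"
    have "continuous_on (cbox 0 1) (\<lambda>x. Lc \<beta> (h * (x - 1/2)))"
    proof (rule continuous_on_compose2[OF Lc_cont])
      show "(\<lambda>x. h * (x - 1/2)) ` cbox 0 1 \<subseteq> {-\<beta>/2<..<\<beta>/2}"
        using arg_bound[of h \<beta>] h by (force simp: abs_less_iff)
    qed (auto intro!: continuous_intros)
    then show "(\<lambda>x. Lc \<beta> (h * (x - 1/2))) integrable_on cbox 0 1" by (rule integrable_continuous)
  next
    show "continuous_on ({-\<beta><..<\<beta>} \<times> cbox 0 1) (\<lambda>(h, x). (x - 1/2) * dL \<beta> (h * (x - 1/2)))"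
      by (rule prod_cont)
  qed (use assms in auto)
  moreover have "at h within {-\<beta><..<\<beta>} = at h" using assms by (intro at_within_open) auto
  ultimately show ?thesis unfolding Gc_def dG_def by simp
qed

lemma dG_cont: "continuous_on {-\<beta><..<\<beta>} (dG \<beta>)"
  unfolding dG_def using integral_continuous_on_param[OF prod_cont] by simp

lemma deriv_GG: assumes "\<beta> > 0" "\<bar>h\<bar> < \<beta>" shows "deriv (GG \<beta>) h = dG \<beta> h"
proof -
  have "(GG \<beta> has_real_derivative dG \<beta> h) (at h)"
  proof (rule has_field_derivative_transform_within_open[OF Gc_deriv[OF assms(2)], where S="{-\<beta><..<\<beta>}"])
    show "\<And>x. x \<in> {-\<beta><..<\<beta>} \<Longrightarrow> Gc \<beta> x = GG \<beta> x" using GG_eq assms(1) by auto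
  qed (use assms in auto)
  then show ?thesis by (rule DERIV_imp_deriv)
qed

lemma comp_sub: fixes h \<beta> :: real assumes "\<bar>h\<bar> < \<beta>" shows "(\<lambda>x. h * (x - 1/2)) ` {0..1} \<subseteq> {-\<beta>/2<..<\<beta>/2}"
  using arg_bound[of h \<beta>] assms by (force simp: abs_less_iff)

lemma cont_Lc_comp: assumes "\<bar>h\<bar> < \<beta>" shows "continuous_on {0..1} (\<lambda>x. Lc \<beta> (h * (x - 1/2)))"
  by (rule continuous_on_compose2[OF Lc_cont _ comp_sub[OF assms]]) (auto intro!: continuous_intros)

lemma cont_dL_comp: assumes "\<bar>h\<bar> < \<beta>" shows "continuous_on {0..1} (\<lambda>x. (x - 1/2) * dL \<beta> (h * (x - 1/2)))"
  by (intro continuous_intros continuous_on_compose2[OF dL_cont _ comp_sub[OF assms]]) (auto intro!: continuous_intros)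

lemma Gc_has_int: assumes "\<bar>h\<bar> < \<beta>" shows "((\<lambda>x. Lc \<beta> (h * (x - 1/2))) has_integral Gc \<beta> h) {0..1}"
  unfolding Gc_def by (rule integrable_integral integrable_continuous_interval cont_Lc_comp assms)+

lemma dG_has_int: assumes "\<bar>h\<bar> < \<beta>" shows "((\<lambda>x. (x - 1/2) * dL \<beta> (h * (x - 1/2))) has_integral dG \<beta> h) {0..1}"
  unfolding dG_def by (rule integrable_integral integrable_continuous_interval cont_dL_comp assms)+

lemma Gc_0: "Gc \<beta> 0 = 0" by (simp add: Gc_def Lc_0)
lemma dG_0: "dG \<beta> 0 = 0" by (simp add: dG_def dL_0)

lemma Gc_identity: assumes "\<bar>h\<bar> < \<beta>" shows "h * dG \<beta> h + Gc \<beta> h = Lc \<beta> (h/2)"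
proof -
  define F where "F x = (x - 1/2) * Lc \<beta> (h * (x - 1/2))" for x
  define F' where "F' x = Lc \<beta> (h * (x - 1/2)) + h * ((x - 1/2) * dL \<beta> (h * (x - 1/2)))" for x
  have "(F has_vector_derivative F' x) (at x within {0..1})" if x: "x \<in> {0..1}" for x
  proof -
    have b: "\<bar>h * (x - 1/2)\<bar> < \<beta>/2" using arg_bound[OF assms x] .
    have Lcd: "((\<lambda>x. Lc \<beta> (h * (x - 1/2))) has_real_derivative dL \<beta> (h * (x - 1/2)) * h) (at x)"
      by (intro DERIV_chain2[where f="Lc \<beta>" and g="\<lambda>x. h * (x - 1/2)", OF Lc_deriv[OF b]]) (auto intro!: derivative_eq_intros)
    have d0: "((\<lambda>x. x - 1/2) has_real_derivative 1) (at x)" by (auto intro!: derivative_eq_intros)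
    have "((\<lambda>x. (x - 1/2) * Lc \<beta> (h * (x - 1/2))) has_real_derivative (x - 1/2) * (dL \<beta> (h * (x - 1/2)) * h) + 1 * Lc \<beta> (h * (x - 1/2))) (at x)"
      by (rule DERIV_mult'[OF d0 Lcd])
    then have "(F has_real_derivative F' x) (at x)" unfolding F'_def F_def[abs_def] by (simp add: algebra_simps)
    then show ?thesis
      by (simp add: has_real_derivative_iff_has_vector_derivative[symmetric] has_field_derivative_at_within)
  qed
  then have i1: "(F' has_integral (F 1 - F 0)) {0..1}"
    by (intro fundamental_theorem_of_calculus) auto
  have i2: "(F' has_integral (Gc \<beta> h + h * dG \<beta> h)) {0..1}"
    unfolding F'_def[abs_def] by (intro has_integral_add has_integral_mult_right Gc_has_int dG_has_int assms)
  have "F 1 - F 0 = Gc \<beta> h + h * dG \<beta> h" using has_integral_unique[OF i1 i2] .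
  moreover have "F 1 - F 0 = Lc \<beta> (h/2)"
  proof -
    have "F 0 = - (1/2) * Lc \<beta> (- (h/2))" unfolding F_def by (simp add: algebra_simps)
    moreover have "F 1 = (1/2) * Lc \<beta> (h/2)" unfolding F_def by (simp add: algebra_simps)
    ultimately show ?thesis by (simp add: Lc_even)
  qed
  ultimately show ?thesis by simp
qed

lemma dell_mono: assumes "u < v" "v < \<beta>/2" shows "dell \<beta> u < dell \<beta> v"
proof -
  define a where "a = tt \<beta> * exp u"
  define b where "b = tt \<beta> * exp v"
  have "a < b" unfolding a_def b_def using assms tt_pos[of \<beta>] by simp
  moreover have "b < 1" unfolding b_def using tt_exp_lt1 assms by auto
  moreover have "0 < a" unfolding a_def using tt_pos[of \<beta>] by simp
  ultimately have "a / (1 - a) < b / (1 - b)" by (simp add: divide_simps) (simp add: algebra_simps)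
  then show ?thesis unfolding dell_def a_def b_def .
qed

lemma dL_mono: assumes "-\<beta>/2 < u" "u < v" "v < \<beta>/2" shows "dL \<beta> u < dL \<beta> v"
  using dell_mono[of u v \<beta>] dell_mono[of "-v" "-u" \<beta>] assms unfolding dL_def by auto

lemma dG_strict_mono: assumes "0 \<le> h1" "h1 < h2" "h2 < \<beta>" shows "dG \<beta> h1 < dG \<beta> h2"
proof -
  define g where "g x = (x - 1/2) * dL \<beta> (h2 * (x - 1/2)) - (x - 1/2) * dL \<beta> (h1 * (x - 1/2))" for x
  have a1: "\<bar>h1\<bar> < \<beta>" and a2: "\<bar>h2\<bar> < \<beta>" using assms by auto
  have gi: "(g has_integral (dG \<beta> h2 - dG \<beta> h1)) {0..1}"
    unfolding g_def[abs_def] by (intro has_integral_diff dG_has_int a1 a2)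
  have gpos: "g x > 0" if x: "x \<in> {0..1}" "x \<noteq> 1/2" for x
  proof -
    have b1: "\<bar>h1 * (x - 1/2)\<bar> < \<beta>/2" using arg_bound[OF a1 x(1)] .
    have b2: "\<bar>h2 * (x - 1/2)\<bar> < \<beta>/2" using arg_bound[OF a2 x(1)] .
    show ?thesis
    proof (cases "x > 1/2")
      case True
      have "h1 * (x - 1/2) < h2 * (x - 1/2)" using True assms by (intro mult_strict_right_mono) auto
      then have "dL \<beta> (h1 * (x - 1/2)) < dL \<beta> (h2 * (x - 1/2))" using b1 b2 by (intro dL_mono) auto
      then show ?thesis unfolding g_def using True by (simp add: right_diff_distrib[symmetric])
    next
      case False
      then have xl: "x < 1/2" using x by auto
      have "h2 * (x - 1/2) < h1 * (x - 1/2)" using xl assms by (intro mult_strict_right_mono_neg) auto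
      then have "dL \<beta> (h2 * (x - 1/2)) < dL \<beta> (h1 * (x - 1/2))" using b1 b2 by (intro dL_mono) auto
      then have "(x - 1/2) * dL \<beta> (h1 * (x - 1/2)) < (x - 1/2) * dL \<beta> (h2 * (x - 1/2))"
        using xl by (intro mult_strict_left_mono_neg) auto
      then show ?thesis unfolding g_def by simp
    qed
  qed
  have gnn: "g x \<ge> 0" if "x \<in> {0..1}" for x
  proof (cases "x = 1/2")
    case True then show ?thesis unfolding g_def True by simp
  next
    case False then show ?thesis using gpos[OF that] by simp
  qed
  have "dG \<beta> h2 - dG \<beta> h1 \<ge> 0" by (rule has_integral_nonneg[OF gi gnn])
  moreover have "dG \<beta> h2 - dG \<beta> h1 \<noteq> 0"
  proof
    assume 0: "dG \<beta> h2 - dG \<beta> h1 = 0"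
    have gc: "continuous_on (cbox 0 1) g"
      unfolding g_def[abs_def] using cont_dL_comp[OF a1] cont_dL_comp[OF a2]
      by (auto intro!: continuous_intros)
    have "g 1 = 0"
      by (rule has_integral_0_cbox_imp_0[OF gc, of 1]) (use gi 0 gnn in auto)
    with gpos[of 1] show False by auto
  qed
  ultimately show ?thesis by simp
qed

lemma dG_mono: assumes "0 \<le> h1" "h1 \<le> h2" "h2 < \<beta>" shows "dG \<beta> h1 \<le> dG \<beta> h2"
  using dG_strict_mono[of h1 h2 \<beta>] assms by (cases "h1 = h2") auto

lemma Lc_nonneg: assumes "\<beta> > 0" "\<bar>u\<bar> < \<beta>/2" shows "Lc \<beta> u \<ge> 0"
proof -
  define t where "t = tt \<beta>"
  have t0: "0 < t" "t < 1" using tt_pos tt_lt1 assms unfolding t_def by auto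
  define x where "x = exp u"
  have x0: "x > 0" unfolding x_def by simp
  have e: "exp (-u) = 1 / x" unfolding x_def by (simp add: exp_minus field_simps)
  have p1: "1 - t * x > 0" using tt_exp_lt1[of u \<beta>] assms unfolding t_def x_def by auto
  have p2: "1 - t / x > 0" using tt_exp_lt1[of "-u" \<beta>] assms e unfolding t_def by auto
  have "x + 1/x \<ge> 2"
  proof -
    have "(x - 1)^2 \<ge> 0" by simp
    then show ?thesis using x0 by (simp add: divide_simps power2_eq_square algebra_simps)
  qed
  then have m: "t * 2 \<le> t * (x + 1/x)" using t0 by (intro mult_left_mono) auto
  have eq: "(1 - t * x) * (1 - t / x) = 1 + t^2 - t * (x + 1/x)"
    using x0 by (simp add: field_simps power2_eq_square)
  have "(1 - t * x) * (1 - t / x) \<le> (1 - t)^2"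
    unfolding eq using m by (simp add: power2_eq_square algebra_simps)
  then have "ln ((1 - t * x) * (1 - t / x)) \<le> ln ((1 - t)^2)"
    using p1 p2 by (intro ln_mono) (auto intro: mult_pos_pos)
  moreover have "ln ((1 - t * x) * (1 - t / x)) = ln (1 - t * x) + ln (1 - t / x)"
    using p1 p2 by (rule ln_mult_pos)
  moreover have "ln ((1 - t)^2) = 2 * ln (1 - t)" using t0 by (simp add: ln_realpow)
  ultimately have "ln (1 - t * x) + ln (1 - t / x) \<le> 2 * ln (1 - t)" by simp
  then show ?thesis unfolding Lc_def ell_def t_def[symmetric] x_def[symmetric] e by simp
qed

lemma ell_neg_bounds: assumes "\<beta> > 0" "0 \<le> u" shows "ln (1 - tt \<beta>) \<le> ell \<beta> (-u)" "ell \<beta> (-u) \<le> 0"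
proof -
  have t0: "0 < tt \<beta>" "tt \<beta> < 1" using tt_pos tt_lt1 assms by auto
  have "exp (-u) \<le> 1" using assms by simp
  then have a: "tt \<beta> * exp (-u) \<le> tt \<beta>" using t0 by (simp add: mult_left_le)
  have b: "0 < tt \<beta> * exp (-u)" using t0 by simp
  have c: "0 < 1 - tt \<beta> * exp (-u)" using a t0 by linarith
  have "ln (1 - tt \<beta> * exp (-u)) \<le> 0" using ln_le_zero_iff[OF c] b by simp
  then show "ln (1 - tt \<beta>) \<le> ell \<beta> (-u)" unfolding ell_def by simp
  have "ln (1 - tt \<beta>) \<le> ln (1 - tt \<beta> * exp (-u))" using a t0 by (intro ln_mono) auto
  then show "ell \<beta> (-u) \<le> 0" unfolding ell_def by simp
qed

lemma Lc_upper: assumes "\<beta> > 0" "0 \<le> u" "u < \<beta>/2" shows "Lc \<beta> u \<le> - ln (1 - tt \<beta> * exp u)"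
proof -
  have "ln (1 - tt \<beta>) \<le> 0" using tt_pos[of \<beta>] tt_lt1[OF assms(1)] by simp
  then show ?thesis using ell_neg_bounds[OF assms(1,2)] unfolding Lc_def ell_def by simp
qed

lemma Lc_lower: assumes "\<beta> > 0" "0 \<le> u" "u < \<beta>/2" shows "Lc \<beta> u \<ge> 2 * ln (1 - tt \<beta>) - ln (1 - tt \<beta> * exp u)"
  using ell_neg_bounds[OF assms(1,2)] unfolding Lc_def ell_def by simp

lemma Lc_unbounded: assumes "\<beta> > 0" shows "\<exists>h. 0 \<le> h \<and> h < \<beta> \<and> Lc \<beta> (h/2) > M"
proof -
  define t where "t = tt \<beta>"
  have t0: "0 < t" "t < 1" using tt_pos tt_lt1 assms unfolding t_def by auto
  define c0 where "c0 = 2 * ln (1 - t)"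
  define M' where "M' = max M 0"
  define \<delta> where "\<delta> = exp (c0 - M' - 1)"
  have d0: "\<delta> > 0" unfolding \<delta>_def by simp
  have "ln (1 - t) < 0" using t0 by simp
  then have "c0 - M' - 1 \<le> ln (1 - t)" unfolding c0_def M'_def by linarith
  then have "\<delta> \<le> exp (ln (1 - t))" unfolding \<delta>_def by simp
  then have "\<delta> \<le> 1 - t" using t0 by simp
  define u where "u = ln ((1 - \<delta>) / t)"
  have pos: "(1 - \<delta>) / t > 0" using \<open>\<delta> \<le> 1 - t\<close> t0 by simp
  have tu: "t * exp u = 1 - \<delta>" unfolding u_def using pos t0 by simp
  have u0: "0 \<le> u" unfolding u_def using \<open>\<delta> \<le> 1 - t\<close> t0 by simp
  have "exp (u - \<beta>/2) < 1" using tu tt_exp[of \<beta> u] d0 unfolding t_def by simp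
  then have u1: "u < \<beta>/2" by simp
  have "Lc \<beta> u \<ge> c0 - ln \<delta>" using Lc_lower[OF assms u0 u1] tu unfolding c0_def t_def by simp
  moreover have "c0 - ln \<delta> = M' + 1" unfolding \<delta>_def by simp
  ultimately have "Lc \<beta> u > M" unfolding M'_def by linarith
  then show ?thesis using u0 u1 by (intro exI[of _ "2*u"]) auto
qed

lemma dG_isCont: assumes "\<bar>h\<bar> < \<beta>" shows "isCont (dG \<beta>) h"
  using dG_cont[of \<beta>] assms by (auto simp: continuous_on_eq_continuous_at abs_less_iff)

lemma dG_surj: assumes "\<beta> > 0" "q > 0" shows "\<exists>h. 0 \<le> h \<and> h < \<beta> \<and> dG \<beta> h = q"
proof -
  have "\<exists>h1. 0 \<le> h1 \<and> h1 < \<beta> \<and> dG \<beta> h1 \<ge> q"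
  proof (rule ccontr)
    assume "\<not> ?thesis"
    then have lt: "\<And>h. 0 \<le> h \<Longrightarrow> h < \<beta> \<Longrightarrow> dG \<beta> h < q" by force
    have Gle: "Gc \<beta> h \<le> q * h" if "0 \<le> h" "h < \<beta>" for h
    proof (cases "h = 0")
      case True then show ?thesis by (simp add: Gc_0)
    next
      case False
      then have "0 < h" using that by simp
      have d: "\<And>x. 0 \<le> x \<Longrightarrow> x \<le> h \<Longrightarrow> (Gc \<beta> has_real_derivative dG \<beta> x) (at x)"
        using that by (intro Gc_deriv) auto
      from MVT2[OF \<open>0 < h\<close> d] obtain z where z: "0 < z" "z < h" "Gc \<beta> h - Gc \<beta> 0 = (h - 0) * dG \<beta> z"
        by blast
      have "dG \<beta> z < q" using lt z that by auto
      then show ?thesis using z \<open>0 < h\<close> by (simp add: Gc_0 mult.commute)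
    qed
    obtain h where h: "0 \<le> h" "h < \<beta>" "Lc \<beta> (h/2) > 2 * q * \<beta>" using Lc_unbounded[OF assms(1)] by blast
    have "Lc \<beta> (h/2) = h * dG \<beta> h + Gc \<beta> h" using Gc_identity[of h \<beta>] h by simp
    also have "\<dots> \<le> h * q + q * h" using Gle[OF h(1,2)] lt[OF h(1,2)] h(1) by (intro add_mono mult_left_mono) auto
    also have "\<dots> \<le> 2 * q * \<beta>" using h assms by (simp add: mult_left_mono)
    finally show False using h(3) by simp
  qed
  then obtain h1 where h1: "0 \<le> h1" "h1 < \<beta>" "dG \<beta> h1 \<ge> q" by blast
  have c: "\<forall>x. 0 \<le> x \<and> x \<le> h1 \<longrightarrow> isCont (dG \<beta>) x"
    using h1 by (auto intro!: dG_isCont)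
  have "\<exists>x. 0 \<le> x \<and> x \<le> h1 \<and> dG \<beta> x = q"
    by (rule IVT[OF _ h1(3) h1(1) c]) (use assms dG_0[of \<beta>] in simp)
  then show ?thesis using h1 by force
qed

lemma legendre_ineq:
  assumes "0 \<le> h0" "h0 < \<beta>" "0 \<le> h'" "h' < \<beta>"
  shows "Gc \<beta> h0 - dG \<beta> h0 * h0 \<le> Gc \<beta> h' - dG \<beta> h0 * h'"
proof (cases h0 h' rule: linorder_cases)
  case less
  have d: "\<And>x. h0 \<le> x \<Longrightarrow> x \<le> h' \<Longrightarrow> (Gc \<beta> has_real_derivative dG \<beta> x) (at x)"
    using assms by (intro Gc_deriv) auto
  from MVT2[OF less d] obtain z where z: "h0 < z" "z < h'" "Gc \<beta> h' - Gc \<beta> h0 = (h' - h0) * dG \<beta> z"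
    by blast
  have "dG \<beta> h0 \<le> dG \<beta> z" using z assms by (intro dG_mono) auto
  then have "(h' - h0) * dG \<beta> h0 \<le> (h' - h0) * dG \<beta> z" using less by (intro mult_left_mono) auto
  then show ?thesis using z by (simp add: algebra_simps)
next
  case greater
  have d: "\<And>x. h' \<le> x \<Longrightarrow> x \<le> h0 \<Longrightarrow> (Gc \<beta> has_real_derivative dG \<beta> x) (at x)"
    using assms by (intro Gc_deriv) auto
  from MVT2[OF greater d] obtain z where z: "h' < z" "z < h0" "Gc \<beta> h0 - Gc \<beta> h' = (h0 - h') * dG \<beta> z"
    by blast
  have "dG \<beta> z \<le> dG \<beta> h0" using z assms by (intro dG_mono) auto
  then have "(h0 - h') * dG \<beta> z \<le> (h0 - h') * dG \<beta> h0" using greater by (intro mult_left_mono) auto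
  then show ?thesis using z by (simp add: algebra_simps)
qed simp

lemma htilde_eq: assumes "\<beta> > 0" "0 \<le> h" "h < \<beta>" shows "htilde \<beta> (dG \<beta> h) = h"
  unfolding htilde_def
proof (rule the1_equality)
  show "\<exists>!x. 0 \<le> x \<and> x < \<beta> \<and> deriv (GG \<beta>) x = dG \<beta> h"
  proof (rule ex1I[of _ h])
    show "0 \<le> h \<and> h < \<beta> \<and> deriv (GG \<beta>) h = dG \<beta> h" using assms deriv_GG by auto
  next
    fix y assume y: "0 \<le> y \<and> y < \<beta> \<and> deriv (GG \<beta>) y = dG \<beta> h"
    then have "dG \<beta> y = dG \<beta> h" using deriv_GG[of \<beta> y] assms by auto
    then show "y = h" using dG_strict_mono[of y h \<beta>] dG_strict_mono[of h y \<beta>] y assms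
      by (cases y h rule: linorder_cases) auto
  qed
qed (use assms deriv_GG in auto)

lemma htilde_prop: assumes "\<beta> > 0" "q > 0"
  shows "0 \<le> htilde \<beta> q" "htilde \<beta> q < \<beta>" "dG \<beta> (htilde \<beta> q) = q"
proof -
  obtain h where h: "0 \<le> h" "h < \<beta>" "dG \<beta> h = q" using dG_surj[OF assms] by blast
  then have "htilde \<beta> q = h" using htilde_eq[OF assms(1) h(1,2)] by simp
  then show "0 \<le> htilde \<beta> q" "htilde \<beta> q < \<beta>" "dG \<beta> (htilde \<beta> q) = q" using h by auto
qed

definition Fa :: "real \<Rightarrow> real \<Rightarrow> real \<Rightarrow> real" where
  "Fa s p x = -(1/s) * (ln (1 + sqrt (1 - p * exp (s * x))) - ln (1 - sqrt (1 - p * exp (s * x))))"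

lemma Fa_deriv:
  assumes s: "s \<noteq> 0" and p: "p > 0" and x: "p * exp (s * x) < 1"
  shows "(Fa s p has_real_derivative 1 / sqrt (1 - p * exp (s * x))) (at x)"
proof -
  define E where "E = p * exp (s * x)"
  define w where "w = 1 - E"
  define g where "g = sqrt w"
  have E0: "E > 0" unfolding E_def using p by simp
  have w0: "w > 0" "w < 1" unfolding w_def E_def using x E0 E_def by auto
  have g0: "g > 0" "g < 1" unfolding g_def using w0 by (auto simp: real_sqrt_lt_1_iff)
  have gsq: "g * g = w" unfolding g_def using w0 by simp
  have dw: "((\<lambda>x. 1 - p * exp (s * x)) has_real_derivative - (E * s)) (at x)"
    unfolding E_def by (auto intro!: derivative_eq_intros)
  have dg: "((\<lambda>x. sqrt (1 - p * exp (s * x))) has_real_derivative (inverse (sqrt w) / 2) * (- (E * s))) (at x)"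
    using DERIV_chain2[OF DERIV_real_sqrt[OF w0(1), unfolded w_def E_def] dw[unfolded E_def]] unfolding w_def E_def by simp
  define g' where "g' = (inverse g / 2) * (- (E * s))"
  have dg': "((\<lambda>x. sqrt (1 - p * exp (s * x))) has_real_derivative g') (at x)"
    using dg unfolding g'_def g_def .
  have a1: "((\<lambda>x. 1 + sqrt (1 - p * exp (s * x))) has_real_derivative 0 + g') (at x)"
    by (rule DERIV_add[OF DERIV_const dg'])
  have a2: "((\<lambda>x. 1 - sqrt (1 - p * exp (s * x))) has_real_derivative 0 - g') (at x)"
    by (rule DERIV_diff[OF DERIV_const dg'])
  have gs: "sqrt (1 - p * exp (s * x)) = g" unfolding g_def w_def E_def ..
  have pos1: "0 < 1 + sqrt (1 - p * exp (s * x))" using g0 gs by simp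
  have pos2: "0 < 1 - sqrt (1 - p * exp (s * x))" using g0 gs by simp
  have d1: "((\<lambda>x. ln (1 + sqrt (1 - p * exp (s * x)))) has_real_derivative (1 / (1 + g)) * g') (at x)"
    using DERIV_chain2[OF DERIV_ln_divide[OF pos1] a1] unfolding g_def w_def E_def by simp
  have d2: "((\<lambda>x. ln (1 - sqrt (1 - p * exp (s * x)))) has_real_derivative (1 / (1 - g)) * (0 - g')) (at x)"
    using DERIV_chain2[OF DERIV_ln_divide[OF pos2] a2] unfolding g_def w_def E_def by simp
  have dF: "(Fa s p has_real_derivative -(1/s) * ((1 / (1 + g)) * g' - (1 / (1 - g)) * (0 - g'))) (at x)"
    unfolding Fa_def[abs_def] by (intro DERIV_cmult DERIV_diff d1 d2)
  have "-(1/s) * ((1 / (1 + g)) * g' - (1 / (1 - g)) * (0 - g')) = 1 / g"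
  proof -
    have "(1 / (1 + g)) * g' - (1 / (1 - g)) * (0 - g') = g' * (2 / ((1 + g) * (1 - g)))"
      using g0 by (simp add: field_simps)
    also have "(1 + g) * (1 - g) = E" using gsq unfolding w_def by (simp add: algebra_simps)
    finally have "(1 / (1 + g)) * g' - (1 / (1 - g)) * (0 - g') = g' * (2 / E)" .
    moreover have "g' * (2 / E) = - s / g" unfolding g'_def using E0 g0 by (simp add: field_simps)
    ultimately show ?thesis using s g0 by simp
  qed
  then show ?thesis using dF unfolding g_def w_def E_def by simp
qed

lemma Fa_int:
  assumes s: "s \<noteq> 0" and p: "p > 0" and x: "\<And>x. x \<in> {0..1} \<Longrightarrow> p * exp (s * x) < 1"
  shows "((\<lambda>x. 1 / sqrt (1 - p * exp (s * x))) has_integral (Fa s p 1 - Fa s p 0)) {0..1}"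
proof (rule fundamental_theorem_of_calculus)
  fix y assume "y \<in> {0..1::real}"
  then have "(Fa s p has_real_derivative 1 / sqrt (1 - p * exp (s * y))) (at y)" by (intro Fa_deriv s p x)
  then show "(Fa s p has_vector_derivative 1 / sqrt (1 - p * exp (s * y))) (at y within {0..1})"
    by (simp add: has_real_derivative_iff_has_vector_derivative[symmetric] has_field_derivative_at_within)
qed simp

lemma neglog: assumes "0 < z" "z < 1" shows "- ln (1 - z) \<le> 2 * (1 / sqrt (1 - z) - 1)"
proof -
  define y where "y = sqrt (1 - z)"
  have y0: "0 < y" unfolding y_def using assms by simp
  have "ln (1 - z) = 2 * ln y" unfolding y_def using assms
    by (simp add: ln_sqrt)
  moreover have "ln (1 / y) \<le> 1 / y - 1" using y0 by (intro ln_le_minus_one) auto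
  moreover have "ln (1 / y) = - ln y" using y0 by (simp add: ln_div)
  ultimately show ?thesis unfolding y_def[symmetric] by simp
qed

lemma ell_le: assumes "\<beta> > 0" "u < \<beta>/2" shows "ell \<beta> u \<le> 2 * (1 / sqrt (1 - tt \<beta> * exp u) - 1)"
proof -
  have "ln (1 - tt \<beta>) \<le> 0" using tt_pos[of \<beta>] tt_lt1[OF assms(1)] by simp
  moreover have "- ln (1 - tt \<beta> * exp u) \<le> 2 * (1 / sqrt (1 - tt \<beta> * exp u) - 1)"
    using tt_pos[of \<beta>] tt_exp_lt1[OF assms(2)] by (intro neglog) auto
  ultimately show ?thesis unfolding ell_def by simp
qed

lemma Phi_bounds: assumes "0 < p" "p < 1"
  shows "0 \<le> ln (1 + sqrt (1 - p)) - ln (1 - sqrt (1 - p))"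
    "ln (1 + sqrt (1 - p)) - ln (1 - sqrt (1 - p)) \<le> 2 * ln 2 - ln p"
proof -
  define y where "y = sqrt (1 - p)"
  have y0: "0 < y" "y < 1" unfolding y_def using assms by (auto simp: real_sqrt_lt_1_iff)
  have yy: "(1 + y) * (1 - y) = p" unfolding y_def using assms by (simp add: algebra_simps)
  have "ln (1 - y) \<le> ln (1 + y)" using y0 by (intro ln_mono) auto
  then show "0 \<le> ln (1 + sqrt (1 - p)) - ln (1 - sqrt (1 - p))" unfolding y_def by simp
  have "ln p = ln (1 + y) + ln (1 - y)" unfolding yy[symmetric] using y0 by (intro ln_mult_pos) auto
  moreover have "ln (1 + y) \<le> ln 2" using y0 by (intro ln_mono) auto
  ultimately show "ln (1 + sqrt (1 - p)) - ln (1 - sqrt (1 - p)) \<le> 2 * ln 2 - ln p" unfolding y_def[symmetric] by simp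
qed

lemma Gc_upper: assumes b: "\<beta> > 0" and h: "0 < h" "h < \<beta>"
  shows "Gc \<beta> h \<le> (8 * ln 2 + 2 * (\<beta> - h)) / h"
proof -
  define t where "t = tt \<beta>"
  define p where "p = t * exp (-h/2)"
  define r where "r = t * exp (h/2)"
  have p_eq: "p = exp (-\<beta>/2 - h/2)" unfolding p_def t_def tt_def by (simp add: exp_add[symmetric])
  have r_eq: "r = exp (h/2 - \<beta>/2)" unfolding r_def t_def tt_def by (simp add: exp_add[symmetric])
  have p0: "0 < p" "p < 1" using p_eq b h by auto
  have r0: "0 < r" "r < 1" using r_eq b h by auto
  have ha: "\<bar>h\<bar> < \<beta>" using h by simp
  have e1: "p * exp (h * x) = t * exp (h * (x - 1/2))" for x
    unfolding p_def by (simp add: mult.assoc exp_add[symmetric] algebra_simps)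
  have e2: "r * exp (- h * x) = t * exp (- (h * (x - 1/2)))" for x
    unfolding r_def by (simp add: mult.assoc exp_add[symmetric] algebra_simps)
  have lt1: "p * exp (h * x) < 1" if "x \<in> {0..1}" for x
    unfolding e1 t_def using arg_bound[OF ha that] by (intro tt_exp_lt1) auto
  have lt2: "r * exp (- h * x) < 1" if "x \<in> {0..1}" for x
    unfolding e2 t_def using arg_bound[OF ha that] by (intro tt_exp_lt1) auto
  have I1: "((\<lambda>x. 1 / sqrt (1 - p * exp (h * x))) has_integral (Fa h p 1 - Fa h p 0)) {0..1}"
    by (rule Fa_int) (use h p0 lt1 in auto)
  have I2: "((\<lambda>x. 1 / sqrt (1 - r * exp (- h * x))) has_integral (Fa (-h) r 1 - Fa (-h) r 0)) {0..1}"
    by (rule Fa_int) (use h r0 lt2 in auto)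
  define bnd where "bnd x = 2 * (1 / sqrt (1 - p * exp (h * x))) + 2 * (1 / sqrt (1 - r * exp (- h * x))) - 4" for x
  have Ib: "(bnd has_integral (2 * (Fa h p 1 - Fa h p 0) + 2 * (Fa (-h) r 1 - Fa (-h) r 0) - 4)) {0..1}"
  proof -
    have "((\<lambda>x::real. 4::real) has_integral 4) {0..1}" using has_integral_const_real[of "4::real" 0 1] by simp
    then show ?thesis unfolding bnd_def[abs_def]
      by (intro has_integral_diff has_integral_add has_integral_mult_right I1 I2)
  qed
  have pw: "Lc \<beta> (h * (x - 1/2)) \<le> bnd x" if "x \<in> {0..1}" for x
  proof -
    have ab: "\<bar>h * (x - 1/2)\<bar> < \<beta>/2" using arg_bound[OF ha that] .
    have "ell \<beta> (h * (x - 1/2)) \<le> 2 * (1 / sqrt (1 - p * exp (h * x)) - 1)"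
      unfolding e1 t_def using ab by (intro ell_le b) auto
    moreover have "ell \<beta> (- (h * (x - 1/2))) \<le> 2 * (1 / sqrt (1 - r * exp (- h * x)) - 1)"
      unfolding e2 t_def using ab by (intro ell_le b) auto
    ultimately show ?thesis unfolding Lc_def bnd_def by simp
  qed
  have "Gc \<beta> h \<le> 2 * (Fa h p 1 - Fa h p 0) + 2 * (Fa (-h) r 1 - Fa (-h) r 0) - 4"
    by (rule has_integral_le[OF Gc_has_int[OF ha] Ib pw])
  moreover have "Fa h p 1 - Fa h p 0 \<le> (2 * ln 2 + \<beta>/2 + h/2) / h"
  proof -
    have pe: "p * exp h = r" unfolding p_def r_def by (simp add: mult.assoc exp_add[symmetric])
    have "Fa h p 1 - Fa h p 0 = ((ln (1 + sqrt (1 - p)) - ln (1 - sqrt (1 - p))) - (ln (1 + sqrt (1 - r)) - ln (1 - sqrt (1 - r)))) / h"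
      unfolding Fa_def using pe h by (simp add: field_simps)
    also have "\<dots> \<le> (2 * ln 2 - ln p) / h"
      using Phi_bounds[OF p0] Phi_bounds[OF r0] h by (intro divide_right_mono) auto
    also have "2 * ln 2 - ln p = 2 * ln 2 + \<beta>/2 + h/2" unfolding p_eq by simp
    finally show ?thesis .
  qed
  moreover have "Fa (-h) r 1 - Fa (-h) r 0 \<le> (2 * ln 2 + \<beta>/2 + h/2) / h"
  proof -
    have re: "r * exp (-h) = p" unfolding p_def r_def by (simp add: mult.assoc exp_add[symmetric])
    have "Fa (-h) r 1 - Fa (-h) r 0 = ((ln (1 + sqrt (1 - p)) - ln (1 - sqrt (1 - p))) - (ln (1 + sqrt (1 - r)) - ln (1 - sqrt (1 - r)))) / h"
      unfolding Fa_def using re h by (simp add: field_simps)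
    also have "\<dots> \<le> (2 * ln 2 - ln p) / h"
      using Phi_bounds[OF p0] Phi_bounds[OF r0] h by (intro divide_right_mono) auto
    also have "2 * ln 2 - ln p = 2 * ln 2 + \<beta>/2 + h/2" unfolding p_eq by simp
    finally show ?thesis .
  qed
  moreover have aux: "\<And>a x y z::real. a \<le> 2*x + 2*y - 4 \<Longrightarrow> x \<le> z \<Longrightarrow> y \<le> z \<Longrightarrow> a \<le> 4*z - 4" by linarith
  ultimately have "Gc \<beta> h \<le> 4 * ((2 * ln 2 + \<beta>/2 + h/2) / h) - 4" by blast
  also have "\<dots> = (8 * ln 2 + 2 * (\<beta> - h)) / h" using h by (simp add: field_simps)
  finally show ?thesis .
qed

lemma Gamma_ln: assumes "\<beta> > 0"
  shows "ln (Gamma_beta \<beta>) = - \<beta> + ln ((1 + tt \<beta>) / (1 - tt \<beta>))"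
proof -
  define t where "t = tt \<beta>"
  have t0: "0 < t" "t < 1" using tt_pos tt_lt1 assms unfolding t_def by auto
  have e1: "exp (-\<beta>) = t^2" unfolding t_def tt_def by (simp add: power2_eq_square exp_add[symmetric])
  have e2: "exp (-3*\<beta>/2) = t^3" unfolding t_def tt_def
    by (simp add: power3_eq_cube exp_add[symmetric])
  have e3: "exp (-\<beta>/2) = t" unfolding t_def tt_def ..
  have "Gamma_beta \<beta> = t^2 * ((1 + t) / (1 - t))" unfolding Gamma_beta_def e1 e2 e3
    by (simp add: field_simps power3_eq_cube power2_eq_square)
  then have "ln (Gamma_beta \<beta>) = ln (t^2 * ((1 + t) / (1 - t)))" by simp
  also have "\<dots> = ln (t^2) + ln ((1 + t) / (1 - t))" using t0 by (intro ln_mult_pos) auto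
  also have "ln (t^2) = - \<beta>" unfolding e1[symmetric] by simp
  finally show ?thesis unfolding t_def .
qed

lemma powr_m2: "(b::real) > 0 \<Longrightarrow> b powr -2 = 1 / b^2"
  by (simp add: powr_minus divide_inverse)

lemma main_char:
  assumes b: "\<beta> > 0" and hs: "0 < hs" "hs < \<beta>" and key: "Lc \<beta> (hs/2) = - ln (Gamma_beta \<beta>)"
  shows "q_beta \<beta> = dG \<beta> hs"
proof -
  define qs where "qs = dG \<beta> hs"
  have qs0: "qs > 0" unfolding qs_def using dG_strict_mono[of 0 hs \<beta>] hs dG_0[of \<beta>] by simp
  have ident: "ln (Gamma_beta \<beta>) + Gc \<beta> hs = - hs * qs"
    using Gc_identity[of hs \<beta>] hs key unfolding qs_def by simp
  define as where "as = 1 / sqrt qs"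
  have as0: "as > 0" unfolding as_def using qs0 by simp
  have asq: "as powr -2 = qs"
  proof -
    have "as powr -2 = 1 / as^2" by (rule powr_m2[OF as0])
    also have "\<dots> = qs" unfolding as_def using qs0 by (simp add: power_divide)
    finally show ?thesis .
  qed
  have T0le: "T0 \<beta> c \<le> - hs * (qs * c + 1 / c)" if c: "c > 0" for c
  proof -
    define q where "q = c powr -2"
    have q0: "q > 0" unfolding q_def using c by simp
    have qc: "c * q = 1 / c" unfolding q_def powr_m2[OF c] using c by (simp add: power2_eq_square)
    note hp = htilde_prop[OF b q0]
    define hq where "hq = htilde \<beta> q"
    have GG: "GG \<beta> hq = Gc \<beta> hq" using GG_eq[OF b] hp unfolding hq_def by simp
    have leg: "Gc \<beta> hq - q * hq \<le> Gc \<beta> hs - q * hs"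
      using legendre_ineq[of hq \<beta> hs] hp hs unfolding hq_def by simp
    have "T0 \<beta> c = c * ln (Gamma_beta \<beta>) + c * (Gc \<beta> hq - q * hq)"
      unfolding T0_def q_def[symmetric] hq_def[symmetric] GG ..
    also have "\<dots> \<le> c * ln (Gamma_beta \<beta>) + c * (Gc \<beta> hs - q * hs)"
      using leg c by (intro add_left_mono mult_left_mono) auto
    also have "\<dots> = c * (ln (Gamma_beta \<beta>) + Gc \<beta> hs) - (c * q) * hs" by (simp add: algebra_simps)
    also have "\<dots> = - hs * (qs * c + 1 / c)" unfolding ident qc by (simp add: algebra_simps)
    finally show ?thesis .
  qed
  have T0eq: "T0 \<beta> as = - hs * (qs * as + 1 / as)"
  proof -
    have hq: "htilde \<beta> qs = hs" unfolding qs_def using htilde_eq[OF b] hs by simp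
    have GG: "GG \<beta> hs = Gc \<beta> hs" using GG_eq[OF b] hs by simp
    have qc: "as * qs = 1 / as" unfolding as_def using qs0 by (simp add: field_simps)
    have "T0 \<beta> as = as * ln (Gamma_beta \<beta>) + as * (Gc \<beta> hs - qs * hs)"
      unfolding T0_def asq hq GG ..
    also have "\<dots> = as * (ln (Gamma_beta \<beta>) + Gc \<beta> hs) - (as * qs) * hs" by (simp add: algebra_simps)
    also have "\<dots> = - hs * (qs * as + 1 / as)" unfolding ident qc by (simp add: algebra_simps)
    finally show ?thesis .
  qed
  have strict: "qs * as + 1 / as < qs * c + 1 / c" if c: "c > 0" "c \<noteq> as" for c
  proof -
    define r where "r = sqrt qs"
    have r0: "r > 0" unfolding r_def using qs0 by simp
    have rr: "r * r = qs" unfolding r_def using qs0 by simp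
    have as_r: "as = 1 / r" unfolding as_def r_def ..
    have "r * c \<noteq> 1" using c r0 as_r by (auto simp: field_simps)
    then have "(r * c - 1)^2 > 0" by simp
    then have "(r * c - 1)^2 / c > 0" using c by simp
    moreover have "(r * c - 1)^2 / c = (qs * c + 1 / c) - (qs * as + 1 / as)"
      unfolding as_r rr[symmetric] using c r0 by (simp add: field_simps power2_eq_square)
    ultimately show ?thesis by simp
  qed
  have "a_beta \<beta> = as"
    unfolding a_beta_def
  proof (rule the1_equality)
    have max: "\<forall>c>0. T0 \<beta> c \<le> T0 \<beta> as"
    proof (intro allI impI)
      fix c :: real assume c: "c > 0"
      have "qs * as + 1 / as \<le> qs * c + 1 / c" using strict[OF c] by (cases "c = as") auto
      then have "- hs * (qs * c + 1 / c) \<le> - hs * (qs * as + 1 / as)" using hs by (intro mult_left_mono_neg) auto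
      then show "T0 \<beta> c \<le> T0 \<beta> as" using T0le[OF c] T0eq by simp
    qed
    show "\<exists>!a. a > 0 \<and> (\<forall>c>0. T0 \<beta> c \<le> T0 \<beta> a)"
    proof (rule ex1I[of _ as])
      show "as > 0 \<and> (\<forall>c>0. T0 \<beta> c \<le> T0 \<beta> as)" using as0 max by simp
    next
      fix a assume a: "a > 0 \<and> (\<forall>c>0. T0 \<beta> c \<le> T0 \<beta> a)"
      show "a = as"
      proof (rule ccontr)
        assume ne: "a \<noteq> as"
        have "- hs * (qs * a + 1 / a) < - hs * (qs * as + 1 / as)"
          using strict[of a] a ne hs by (intro mult_strict_left_mono_neg) auto
        then have "T0 \<beta> a < T0 \<beta> as" using T0le[of a] a T0eq by simp
        with a as0 show False by force
      qed
    qed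
    show "as > 0 \<and> (\<forall>c>0. T0 \<beta> c \<le> T0 \<beta> as)" using as0 max by simp
  qed
  then show ?thesis unfolding q_beta_def using asq qs_def by simp
qed

lemma exp_half_ge: assumes "(\<beta>::real) \<ge> 0" shows "\<beta> \<le> exp (\<beta>/2)"
proof -
  have e: "exp (\<beta>/2) = exp (\<beta>/4)^2" by (simp add: power2_eq_square exp_add[symmetric])
  have "1 + \<beta>/4 \<le> exp (\<beta>/4)" by (rule exp_ge_add_one_self)
  then have "(1 + \<beta>/4)^2 \<le> exp (\<beta>/4)^2" using assms by (intro power_mono) auto
  moreover have "\<beta> \<le> (1 + \<beta>/4)^2"
  proof -
    have "0 \<le> (\<beta>/4 - 1)^2" by simp
    then show ?thesis by (simp add: power2_eq_square algebra_simps)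
  qed
  ultimately show ?thesis unfolding e by simp
qed

lemma tt_le: assumes "\<beta> > 0" shows "tt \<beta> \<le> 1 / \<beta>"
proof -
  have m: "tt \<beta> * exp (\<beta>/2) = 1" unfolding tt_def by (simp add: exp_add[symmetric])
  have "tt \<beta> = 1 / exp (\<beta>/2)" using m by (simp add: eq_divide_eq)
  also have "\<dots> \<le> 1 / \<beta>" using exp_half_ge[of \<beta>] assms by (intro divide_left_mono) auto
  finally show ?thesis .
qed

lemma Gc_nonneg: assumes "\<beta> > 0" "\<bar>h\<bar> < \<beta>" shows "Gc \<beta> h \<ge> 0"
proof (rule has_integral_nonneg[OF Gc_has_int[OF assms(2)]])
  fix x assume x: "x \<in> {0..1::real}"
  show "0 \<le> Lc \<beta> (h * (x - 1/2))" using Lc_nonneg[OF assms(1) arg_bound[OF assms(2) x]] .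
qed

lemma asympt:
  assumes b12: "\<beta> \<ge> 12"
  shows "\<exists>hs. 0 < hs \<and> hs < \<beta> \<and> Lc \<beta> (hs/2) = - ln (Gamma_beta \<beta>) \<and> \<bar>dG \<beta> hs - 1\<bar> \<le> 136 / \<beta>^2"
proof -
  have b: "\<beta> > 0" using b12 by simp
  define t where "t = tt \<beta>"
  have t0: "0 < t" unfolding t_def by (rule tt_pos)
  have tb: "t \<le> 1 / \<beta>" unfolding t_def using tt_le[OF b] .
  have "1 / \<beta> \<le> 1 / 12" using b12 by (intro divide_left_mono) auto
  then have th: "t \<le> 1/12" using tb by simp
  define lc where "lc = ln ((1 + t) / (1 - t))"
  have rat: "1 \<le> (1 + t) / (1 - t)" using t0 th by (simp add: field_simps)
  have lc0: "0 \<le> lc" unfolding lc_def using rat by simp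
  have "lc \<le> (1 + t) / (1 - t) - 1" unfolding lc_def using rat by (intro ln_le_minus_one) auto
  also have "(1 + t) / (1 - t) - 1 \<le> 4 * t" using t0 th by (simp add: field_simps)
  finally have lc4: "lc \<le> 4 * t" .
  define M where "M = \<beta> - lc"
  have M0: "M > 0" unfolding M_def using lc4 th b12 by simp
  have gam: "- ln (Gamma_beta \<beta>) = M" unfolding M_def lc_def t_def using Gamma_ln[OF b] by simp
  obtain h1 where h1: "0 \<le> h1" "h1 < \<beta>" "Lc \<beta> (h1/2) > M" using Lc_unbounded[OF b] by blast
  have cont: "\<forall>x. 0 \<le> x \<and> x \<le> h1 \<longrightarrow> isCont (\<lambda>h. Lc \<beta> (h/2)) x"
  proof (intro allI impI)
    fix x assume x: "0 \<le> x \<and> x \<le> h1"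
    have "isCont (Lc \<beta>) (x/2)" using x h1 by (intro DERIV_isCont[OF Lc_deriv]) auto
    moreover have c1: "isCont (\<lambda>h::real. h/2) x" by (intro continuous_intros) simp
    ultimately show "isCont (\<lambda>h. Lc \<beta> (h/2)) x" using isCont_o2[OF c1] by simp
  qed
  obtain hs where hs: "0 \<le> hs" "hs \<le> h1" "Lc \<beta> (hs/2) = M"
    using IVT[of "\<lambda>h. Lc \<beta> (h/2)" 0 M h1] h1 cont M0 Lc_0[of \<beta>] by auto
  have hs0: "0 < hs" using hs M0 Lc_0[of \<beta>] by (cases "hs = 0") auto
  have hsb: "hs < \<beta>" using hs h1 by simp
  define v where "v = t * exp (hs/2)"
  have v_eq: "v = exp (hs/2 - \<beta>/2)" unfolding v_def t_def by (rule tt_exp)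
  have v0: "0 < v" "v < 1" using v_eq hsb by auto
  have "M \<le> - ln (1 - v)" using Lc_upper[OF b, of "hs/2"] hs hsb unfolding v_def t_def by simp
  then have "ln (1 - v) \<le> lc - \<beta>" unfolding M_def by simp
  then have "exp (ln (1 - v)) \<le> exp (lc - \<beta>)" by simp
  then have "1 - v \<le> exp lc * exp (-\<beta>)" using v0 by (simp add: exp_diff exp_minus divide_inverse)
  also have "exp lc = (1 + t) / (1 - t)" unfolding lc_def using rat by simp
  also have "exp (-\<beta>) = t^2" unfolding t_def tt_def by (simp add: power2_eq_square exp_add[symmetric])
  also have "(1 + t) / (1 - t) * t^2 \<le> 3 * t^2"
  proof -
    have "(1 + t) / (1 - t) \<le> 3" using t0 th by (simp add: field_simps)
    then show ?thesis by (intro mult_right_mono) auto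
  qed
  finally have v1: "1 - v \<le> 3 * t^2" .
  have tsq: "t^2 \<le> t" using t0 th by (simp add: power2_eq_square mult_left_le)
  have v14: "v \<ge> 1/4" using v1 tsq th by simp
  have lnv: "ln v = hs/2 - \<beta>/2" unfolding v_eq by simp
  have "ln (1 / v) \<le> 1 / v - 1" using v0 by (intro ln_le_minus_one) auto
  moreover have "ln (1 / v) = - ln v" using v0 by (simp add: ln_div)
  moreover have "1 / v - 1 = (1 - v) / v" using v0 by (simp add: field_simps)
  moreover have "(1 - v) / v \<le> 4 * (1 - v)"
  proof -
    have "(1 - v) * 1 \<le> (1 - v) * (4 * v)" using v0 v14 by (intro mult_left_mono) auto
    then have "1 - v \<le> (4 * (1 - v)) * v" by (simp add: algebra_simps)
    then show ?thesis using v0 by (simp add: divide_le_eq)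
  qed
  ultimately have "\<beta> - hs \<le> 8 * (1 - v)" unfolding lnv by simp
  then have bh: "\<beta> - hs \<le> 24 * t^2" using v1 by simp
  have hsh: "hs \<ge> \<beta>/2" using bh tsq th b12 by simp
  have ln2: "ln (2::real) \<le> 1" using ln_le_minus_one[of 2] by simp
  have Gu: "Gc \<beta> hs \<le> (8 * ln 2 + 2 * (\<beta> - hs)) / hs" by (rule Gc_upper[OF b hs0 hsb])
  also have "\<dots> \<le> 20 / hs" using hs0 ln2 bh tsq th by (intro divide_right_mono) auto
  also have "\<dots> \<le> 20 / (\<beta>/2)" using hs0 hsh b by (intro divide_left_mono) auto
  finally have Gu': "Gc \<beta> hs \<le> 40 / \<beta>" by simp
  have Gl: "Gc \<beta> hs \<ge> 0" using Gc_nonneg[OF b] hs0 hsb by simp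
  have idn: "hs * dG \<beta> hs + Gc \<beta> hs = M" using Gc_identity[of hs \<beta>] hs hsb hs0 by simp
  have eq: "hs * (dG \<beta> hs - 1) = (\<beta> - hs) - lc - Gc \<beta> hs" using idn unfolding M_def by (simp add: algebra_simps)
  have "\<bar>(\<beta> - hs) - lc - Gc \<beta> hs\<bar> \<le> (\<beta> - hs) + lc + Gc \<beta> hs" using hsb lc0 Gl by simp
  also have "\<dots> \<le> 24 / \<beta> + 4 / \<beta> + 40 / \<beta>"
  proof -
    have "24 * t^2 \<le> 24 / \<beta>" using tsq tb by simp
    moreover have "4 * t \<le> 4 / \<beta>" using tb by simp
    ultimately show ?thesis using bh lc4 Gu' by simp
  qed
  finally have num: "hs * \<bar>dG \<beta> hs - 1\<bar> \<le> 68 / \<beta>" using eq hs0 by (simp add: abs_mult)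
  have "\<bar>dG \<beta> hs - 1\<bar> \<le> (68 / \<beta>) / hs" using num hs0 by (subst pos_le_divide_eq) (auto simp: mult.commute)
  also have "\<dots> \<le> (68 / \<beta>) / (\<beta>/2)" using hs0 hsh b by (intro divide_left_mono) auto
  also have "\<dots> = 136 / \<beta>^2" by (simp add: power2_eq_square field_simps)
  finally show ?thesis using hs0 hsb hs gam by auto
qed

theorem proposition5p1:
  shows "(\<lambda>\<beta>. q_beta \<beta> - 1) \<in> O[at_top](\<lambda>\<beta>::real. 1 / \<beta>^2)"
proof (rule bigoI[where c=136])
  show "\<forall>\<^sub>F \<beta> in at_top. norm (q_beta \<beta> - 1) \<le> 136 * norm (1 / \<beta>^2)"
    unfolding eventually_at_top_linorder
  proof (intro exI[of _ 12] allI impI)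
    fix \<beta> :: real assume b: "\<beta> \<ge> 12"
    obtain hs where hs: "0 < hs" "hs < \<beta>" "Lc \<beta> (hs/2) = - ln (Gamma_beta \<beta>)" "\<bar>dG \<beta> hs - 1\<bar> \<le> 136 / \<beta>^2"
      using asympt[OF b] by blast
    have "q_beta \<beta> = dG \<beta> hs" using main_char[of \<beta> hs] hs b by simp
    then show "norm (q_beta \<beta> - 1) \<le> 136 * norm (1 / \<beta>^2)" using hs(4) by simp
  qed
qed

end
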